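(* For any $c\neq0$, the $\mu$HS equation has a one-parameter family of smooth periodic traveling waves of period one and a one-parameter family of cusped periodic traveling waves of period one moving with speed $c$. That is, there are one-parameter families of $1$-periodic $\varphi\in H^1_{loc}(\mathbb{R})$ (smooth in the first family; smooth except for cusps at the points where $\varphi=c$ in the second) such that, with $\mu:=\int_0^1\varphi\,dx$, for some $a\in\mathbb{R}$, $$\varphi_x^2=-4\mu\varphi+\big((\varphi-c)^2\big)_{xx}+a\quad\text{in }\mathcal{D}'(\mathbb{R}),$$ so that $u(t,x)=\varphi(x-ct)$ is a traveling wave of $-u_{txx}=-2\mu(u)u_x+2u_xu_{xx}+uu_{xxx}$ on $S^1=\mathbb{R}/\mathbb{Z}$.
   Context: $\mu(u)=\int_{S^1}u\,dx$ for $u$ on $S^1=\mathbb{R}/\mathbb{Z}$. A traveling wave of speed $c$ is a solution of the form $u(t,x)=\varphi(x-ct)$, understood weakly via the displayed distributional equation. *)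

theory Defs
  imports "HOL-Analysis.Analysis"
begin

definition smooth_on :: "real set \<Rightarrow> (real \<Rightarrow> real) \<Rightarrow> bool" where
  "smooth_on S f \<longleftrightarrow> (\<forall>n. \<forall>x\<in>S. ((deriv ^^ n) f) differentiable (at x))"

definition test_function :: "(real \<Rightarrow> real) \<Rightarrow> bool" where
  "test_function \<psi> \<longleftrightarrow> smooth_on UNIV \<psi> \<and> bounded {x. \<psi> x \<noteq> 0}"

text \<open>g is a weak derivative of phi in L2_loc, phi being the (continuous) H1_loc representative.\<close>
definition H1loc_weak_deriv :: "(real \<Rightarrow> real) \<Rightarrow> (real \<Rightarrow> real) \<Rightarrow> bool" where
  "H1loc_weak_deriv \<phi> g \<longleftrightarrow>
     (\<forall>x y. x \<le> y \<longrightarrow> (g has_integral (\<phi> y - \<phi> x)) {x..y}) \<and>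
     (\<forall>x y. (\<lambda>t. (g t)\<^sup>2) integrable_on {x..y})"

definition periodic1 :: "(real \<Rightarrow> real) \<Rightarrow> bool" where
  "periodic1 \<phi> \<longleftrightarrow> (\<forall>x. \<phi> (x + 1) = \<phi> x)"

definition muHS_traveling_wave :: "real \<Rightarrow> (real \<Rightarrow> real) \<Rightarrow> bool" where
  "muHS_traveling_wave c \<phi> \<longleftrightarrow> periodic1 \<phi> \<and>
     (\<exists>g a. H1loc_weak_deriv \<phi> g \<and>
        (\<forall>\<psi>. test_function \<psi> \<longrightarrow>
           integral UNIV (\<lambda>x. (g x)\<^sup>2 * \<psi> x) =
             integral UNIV (\<lambda>x. (- 4 * integral {0..1} \<phi> * \<phi> x + a) * \<psi> x)
           + integral UNIV (\<lambda>x. (\<phi> x - c)\<^sup>2 * deriv (deriv \<psi>) x)))"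

definition cusp_at :: "(real \<Rightarrow> real) \<Rightarrow> real \<Rightarrow> bool" where
  "cusp_at \<phi> x0 \<longleftrightarrow>
     (filterlim (deriv \<phi>) at_top (at_left x0) \<and> filterlim (deriv \<phi>) at_bot (at_right x0)) \<or>
     (filterlim (deriv \<phi>) at_bot (at_left x0) \<and> filterlim (deriv \<phi>) at_top (at_right x0))"

definition smooth_wave :: "real \<Rightarrow> (real \<Rightarrow> real) \<Rightarrow> bool" where
  "smooth_wave c \<phi> \<longleftrightarrow> muHS_traveling_wave c \<phi> \<and> smooth_on UNIV \<phi> \<and> (\<exists>x y. \<phi> x \<noteq> \<phi> y)"

definition cusped_wave :: "real \<Rightarrow> (real \<Rightarrow> real) \<Rightarrow> bool" where
  "cusped_wave c \<phi> \<longleftrightarrow> muHS_traveling_wave c \<phi> \<and> smooth_on {x. \<phi> x \<noteq> c} \<phi> \<and>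
     {x. \<phi> x = c} \<noteq> {} \<and> (\<forall>x0. \<phi> x0 = c \<longrightarrow> cusp_at \<phi> x0)"

definition one_param_family :: "((real \<Rightarrow> real) \<Rightarrow> bool) \<Rightarrow> bool" where
  "one_param_family P \<longleftrightarrow> (\<exists>p q. \<exists>F :: real \<Rightarrow> real \<Rightarrow> real. (p::real) < q \<and>
     (\<forall>s\<in>{p<..<q}. P (F s)) \<and>
     (\<forall>s\<in>{p<..<q}. \<forall>t\<in>{p<..<q}. s \<noteq> t \<longrightarrow> \<not> (\<exists>d. \<forall>x. F s x = F t (x + d))))"

end

theory Submission
  imports Defs "HOL-Real_Asymp.Real_Asymp"
begin

fun Dn :: "nat \<Rightarrow> real set \<Rightarrow> (real \<Rightarrow> real) \<Rightarrow> bool" where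
  "Dn 0 S f = (\<forall>x\<in>S. f differentiable at x)"
| "Dn (Suc n) S f = ((\<forall>x\<in>S. f differentiable at x) \<and> Dn n S (deriv f))"

lemma Dn_iff: "Dn n S f \<longleftrightarrow> (\<forall>k\<le>n. \<forall>x\<in>S. ((deriv ^^ k) f) differentiable (at x))"
proof (induction n arbitrary: f)
  case 0 then show ?case by simp
next
  case (Suc n)
  have e: "(deriv ^^ Suc k) f = (deriv ^^ k) (deriv f)" for k
    by (simp add: funpow_Suc_right del: funpow.simps)
  show ?case
  proof
    assume h: "Dn (Suc n) S f"
    show "\<forall>k\<le>Suc n. \<forall>x\<in>S. (deriv ^^ k) f differentiable at x"
    proof (intro allI impI)
      fix k assume "k \<le> Suc n"
      then show "\<forall>x\<in>S. (deriv ^^ k) f differentiable at x"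
        using h Suc[of "deriv f"] e by (cases k) auto
    qed
  next
    assume h: "\<forall>k\<le>Suc n. \<forall>x\<in>S. (deriv ^^ k) f differentiable at x"
    have "\<forall>k\<le>n. \<forall>x\<in>S. (deriv ^^ k) (deriv f) differentiable at x"
      using h e by (metis Suc_le_mono)
    then show "Dn (Suc n) S f" using h Suc[of "deriv f"] by force
  qed
qed

lemma smooth_on_Dn: "smooth_on S f \<longleftrightarrow> (\<forall>n. Dn n S f)"
  unfolding smooth_on_def Dn_iff by blast

lemma Dn_diff: "Dn n S f \<Longrightarrow> x \<in> S \<Longrightarrow> (f has_real_derivative deriv f x) (at x)"
  by (cases n) (auto simp: DERIV_deriv_iff_real_differentiable)

lemma Dn_mono: "Dn (Suc n) S f \<Longrightarrow> Dn n S f"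
  by (induction n arbitrary: f) auto

lemma Dn_mono_le: "Dn m S f \<Longrightarrow> n \<le> m \<Longrightarrow> Dn n S f"
  proof (induction m)
  case (Suc m) then show ?case using Dn_mono by (cases "n = Suc m") auto
qed auto

lemma Dn_subset: "Dn n S f \<Longrightarrow> T \<subseteq> S \<Longrightarrow> Dn n T f"
  by (induction n arbitrary: f) auto

lemma Dn_cong:
  assumes "open S" "\<And>x. x \<in> S \<Longrightarrow> f x = g x" "Dn n S f"
  shows "Dn n S g"
  using assms(2,3)
proof (induction n arbitrary: f g)
  case 0
  then show ?case
    using assms(1) unfolding differentiable_def Dn.simps by (metis has_derivative_transform_within_open)
next
  case (Suc n)
  have d: "g differentiable at x" if "x \<in> S" for x
    using Suc.prems that assms(1) unfolding differentiable_def Dn.simps by (metis has_derivative_transform_within_open)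
  have "deriv f x = deriv g x" if "x \<in> S" for x
    by (rule deriv_cong_ev) (use that assms(1) Suc.prems in \<open>auto simp: eventually_nhds\<close>)
  then show ?case using Suc d by auto
qed

lemma Dn_const: "Dn n S (\<lambda>x. a)"
proof (induction n arbitrary: a)
  case (Suc n)
  have "deriv (\<lambda>x. a) = (\<lambda>x. 0)" by (rule ext) simp
  then show ?case using Suc by simp
qed simp

lemma Dn_id: "Dn n S (\<lambda>x. x)"
proof (cases n)
  case (Suc m)
  have "deriv (\<lambda>x. x) = (\<lambda>x. 1)" by (rule ext) simp
  then show ?thesis using Suc Dn_const by simp
qed simp

lemma Dn_add_mult:
  assumes "open S" 
  shows "Dn n S f \<Longrightarrow> Dn n S g \<Longrightarrow> Dn n S (\<lambda>x. f x + g x) \<and> Dn n S (\<lambda>x. f x * g x)"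
proof (induction n arbitrary: f g)
  case 0
  then show ?case by auto
next
  case (Suc n)
  have fd: "\<And>x. x \<in> S \<Longrightarrow> (f has_real_derivative deriv f x) (at x)"
   and gd: "\<And>x. x \<in> S \<Longrightarrow> (g has_real_derivative deriv g x) (at x)"
    using Dn_diff[OF Suc.prems(1)] Dn_diff[OF Suc.prems(2)] by blast+
  have e1: "deriv (\<lambda>x. f x + g x) x = deriv f x + deriv g x" if "x \<in> S" for x
    using fd[OF that] gd[OF that] by (intro DERIV_imp_deriv derivative_intros)
  have e2: "deriv (\<lambda>x. f x * g x) x = deriv f x * g x + f x * deriv g x" if "x \<in> S" for x
    using fd[OF that] gd[OF that] by (intro DERIV_imp_deriv derivative_eq_intros) auto
  have f1: "Dn n S (deriv f)" "Dn n S (deriv g)" "Dn n S f" "Dn n S g"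
    using Suc.prems Dn_mono by auto
  have a: "Dn n S (\<lambda>x. deriv f x + deriv g x)" using Suc.IH f1 by blast
  have b: "Dn n S (\<lambda>x. deriv f x * g x + f x * deriv g x)"
  proof -
    have "Dn n S (\<lambda>x. deriv f x * g x)" "Dn n S (\<lambda>x. f x * deriv g x)" using Suc.IH f1 by blast+
    then show ?thesis using Suc.IH by blast
  qed
  have "Dn n S (deriv (\<lambda>x. f x + g x))" using a by (rule Dn_cong[OF assms, rotated]) (simp add: e1)
  moreover have "Dn n S (deriv (\<lambda>x. f x * g x))" using b by (rule Dn_cong[OF assms, rotated]) (simp add: e2)
  moreover have "(\<lambda>x. f x + g x) differentiable at x" "(\<lambda>x. f x * g x) differentiable at x" if "x \<in> S" for x
    using Suc.prems that by auto
  ultimately show ?case by auto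
qed

lemma Dn_add: "open S \<Longrightarrow> Dn n S f \<Longrightarrow> Dn n S g \<Longrightarrow> Dn n S (\<lambda>x. f x + g x)"
  using Dn_add_mult by blast
lemma Dn_mult: "open S \<Longrightarrow> Dn n S f \<Longrightarrow> Dn n S g \<Longrightarrow> Dn n S (\<lambda>x. f x * g x)"
  using Dn_add_mult by blast
lemma Dn_minus: "open S \<Longrightarrow> Dn n S f \<Longrightarrow> Dn n S (\<lambda>x. - f x)"
proof -
  assume "open S" "Dn n S f"
  then have "Dn n S (\<lambda>x. (-1) * f x)" using Dn_mult Dn_const by blast
  then show ?thesis by simp
qed
lemma Dn_diff': "open S \<Longrightarrow> Dn n S f \<Longrightarrow> Dn n S g \<Longrightarrow> Dn n S (\<lambda>x. f x - g x)"
  using Dn_add[of S n f "\<lambda>x. - g x"] Dn_minus by simp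

lemma Dn_compose:
  assumes "open S" "open T"
  shows "(\<And>x. x \<in> S \<Longrightarrow> f x \<in> T) \<Longrightarrow> Dn n T G \<Longrightarrow> Dn n S f \<Longrightarrow> Dn n S (\<lambda>x. G (f x))"
proof (induction n arbitrary: G f)
  case 0
  show ?case unfolding Dn.simps
  proof
    fix x assume x: "x \<in> S"
    have "f differentiable at x" using 0 x by simp
    moreover have "G differentiable at (f x)" using 0 x by simp
    ultimately show "(\<lambda>x. G (f x)) differentiable at x"
      using differentiable_chain_at[of f x G] by (simp add: o_def)
  qed
next
  case (Suc n)
  have fd: "\<And>x. x \<in> S \<Longrightarrow> (f has_real_derivative deriv f x) (at x)"
    using Dn_diff[OF Suc.prems(3)] by blast
  have Gd: "\<And>y. y \<in> T \<Longrightarrow> (G has_real_derivative deriv G y) (at y)"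
    using Dn_diff[OF Suc.prems(2)] by blast
  have e: "deriv (\<lambda>x. G (f x)) x = deriv G (f x) * deriv f x" if "x \<in> S" for x
    using DERIV_chain2[OF Gd[OF Suc.prems(1)[OF that]] fd[OF that]] by (rule DERIV_imp_deriv)
  have "Dn n T (deriv G)" using Suc.prems(2) by simp
  moreover have "Dn n S f" using Suc.prems(3) Dn_mono by blast
  ultimately have "Dn n S (\<lambda>x. deriv G (f x))"
    using Suc.IH[of f "deriv G"] Suc.prems(1) by blast
  moreover have "Dn n S (deriv f)" using Suc.prems(3) by simp
  ultimately have "Dn n S (\<lambda>x. deriv G (f x) * deriv f x)"
    using Dn_mult[OF assms(1)] by blast
  then have "Dn n S (deriv (\<lambda>x. G (f x)))" by (rule Dn_cong[OF assms(1), rotated]) (simp add: e)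
  moreover have "(\<lambda>x. G (f x)) differentiable at x" if "x \<in> S" for x
    using DERIV_chain2[OF Gd[OF Suc.prems(1)[OF that]] fd[OF that]] real_differentiable_def by blast
  ultimately show ?case by simp
qed

lemma Dn_ode:
  assumes "open S" "open T" "\<And>x. x \<in> S \<Longrightarrow> f x \<in> T"
    "\<And>x. x \<in> S \<Longrightarrow> (f has_real_derivative G (f x)) (at x)" "\<And>n. Dn n T G"
  shows "Dn n S f"
proof -
  have dif: "\<forall>x\<in>S. f differentiable at x" using assms(4) real_differentiable_def by blast
  show ?thesis
  proof (induction n)
    case 0
    then show ?case using dif by simp
  next
    case (Suc n)
    have "Dn n S (\<lambda>x. G (f x))"
      using Dn_compose[of S T f n G, OF assms(1,2)] assms(3) assms(5)[of n] Suc.IH by blast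
    moreover have "deriv f x = G (f x)" if "x \<in> S" for x using assms(4)[OF that] by (rule DERIV_imp_deriv)
    ultimately have "Dn n S (deriv f)" using Dn_cong[OF assms(1), of "\<lambda>x. G (f x)" "deriv f" n] by simp
    then show ?case using dif by simp
  qed
qed

lemma Dn_sin_cos: "Dn n S sin \<and> Dn n S cos"
proof (induction n arbitrary: S)
  case 0 then show ?case by (simp add: real_differentiable_def, metis DERIV_sin DERIV_cos)
next
  case (Suc n)
  have e: "deriv sin = cos" "deriv cos = (\<lambda>x. - sin x)"
    by (auto intro!: ext DERIV_imp_deriv derivative_eq_intros)
  have "Dn n UNIV sin" "Dn n UNIV cos" using Suc.IH[of UNIV] by auto
  then have "Dn n UNIV (\<lambda>x. - sin x)" using Dn_minus[OF open_UNIV] by blast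
  then have "Dn n S (\<lambda>x. - sin x)" using Dn_subset by blast
  moreover have "(\<forall>x\<in>S. sin differentiable at x) \<and> (\<forall>x\<in>S. cos differentiable at x)"
    by (simp add: real_differentiable_def, metis DERIV_sin DERIV_cos)
  ultimately show ?case using Suc.IH[of S] by (simp add: e)
qed

lemma Dn_sin: "Dn n S sin" and Dn_cos: "Dn n S cos" using Dn_sin_cos by auto

lemma Dn_sin': "open S \<Longrightarrow> Dn n S f \<Longrightarrow> Dn n S (\<lambda>x. sin (f x))"
  using Dn_compose[of S UNIV f n sin] Dn_sin by blast
lemma Dn_cos': "open S \<Longrightarrow> Dn n S f \<Longrightarrow> Dn n S (\<lambda>x. cos (f x))"
  using Dn_compose[of S UNIV f n cos] Dn_cos by blast

lemma open_nz: "open {x::real. x \<noteq> 0}"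
  using open_Collect_neq[of "\<lambda>x. x" "\<lambda>x. 0"] by auto

lemma Dn_inverse: "Dn n {x. x \<noteq> 0} inverse"
proof (rule Dn_ode[where T=UNIV and G="\<lambda>y. - (y * y)"])
  show "open {x::real. x \<noteq> 0}" by (rule open_nz)
  show "(inverse has_real_derivative - (inverse x * inverse x)) (at x)" if "x \<in> {x. x \<noteq> 0}" for x
    using that by (auto intro!: derivative_eq_intros simp: power2_eq_square)
  show "Dn n UNIV (\<lambda>y. - (y * y))" for n
  proof -
    have "Dn n UNIV (\<lambda>y::real. y * y)" using Dn_mult[OF open_UNIV Dn_id Dn_id] .
    then show ?thesis using Dn_minus[OF open_UNIV] by blast
  qed
qed auto

lemma Dn_inverse': 
  assumes "open S" "Dn n S f" "\<And>x. x \<in> S \<Longrightarrow> f x \<noteq> 0"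
  shows "Dn n S (\<lambda>x. inverse (f x))"
  using Dn_compose[of S "{x. x \<noteq> 0}" f n inverse, OF assms(1) open_nz] Dn_inverse assms(2,3) by blast

lemma Dn_sqrt: "Dn n {0<..} sqrt"
proof (rule Dn_ode[where T="{0<..}" and G="\<lambda>y. inverse 2 * inverse y"])
  show "(sqrt has_real_derivative inverse 2 * inverse (sqrt x)) (at x)" if "x \<in> {0<..}" for x
    using DERIV_real_sqrt[of x] that by (simp add: field_simps)
  show "Dn n {0<..} (\<lambda>y. inverse 2 * inverse y)" for n
  proof -
    have "Dn n {0::real<..} inverse" by (rule Dn_subset[OF Dn_inverse]) auto
    then show ?thesis using Dn_mult[OF open_greaterThan Dn_const] by blast
  qed
qed auto

lemma Dn_sqrt':
  assumes "open S" "Dn n S f" "\<And>x. x \<in> S \<Longrightarrow> f x > 0"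
  shows "Dn n S (\<lambda>x. sqrt (f x))"
  using Dn_compose[of S "{0<..}" f n sqrt, OF assms(1) open_greaterThan] Dn_sqrt assms(2,3) by auto

lemma ftc_fin:
  fixes f f' :: "real \<Rightarrow> real"
  assumes "\<And>a b. finite (C \<inter> {a..b})" "a \<le> b"
    "\<And>x. x \<notin> C \<Longrightarrow> (f has_real_derivative f' x) (at x)" "continuous_on {a..b} f"
  shows "(f' has_integral (f b - f a)) {a..b}"
  apply (rule fundamental_theorem_of_calculus_interior_strong[OF assms(1)[of a b] assms(2) _ assms(4)])
  using assms(3) by (auto simp: has_real_derivative_iff_has_vector_derivative)

lemma integral_UNIV_eq:
  fixes f :: "real \<Rightarrow> real"
  assumes "\<And>x. x \<notin> {A..B} \<Longrightarrow> f x = 0" "(f has_integral I) {A..B}"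
  shows "integral UNIV f = I"
proof -
  have "(\<lambda>x. if x \<in> {A..B} then f x else 0) = f" using assms(1) by auto
  then have "(f has_integral I) UNIV" using has_integral_restrict_UNIV[of "{A..B}" f I] assms(2) by simp
  then show ?thesis by (rule integral_unique)
qed

lemma zero_outside_deriv:
  fixes T :: "real \<Rightarrow> real"
  assumes "\<And>x. R < \<bar>x\<bar> \<Longrightarrow> T x = 0" "R < \<bar>x\<bar>"
  shows "deriv T x = 0"
proof -
  have "open {x::real. R < \<bar>x\<bar>}" by (intro open_Collect_less continuous_intros)
  then have "eventually (\<lambda>y. T y = 0) (nhds x)"
    using assms unfolding eventually_nhds by blast
  then have "deriv T x = deriv (\<lambda>_. 0) x" by (rule deriv_cong_ev) simp
  then show ?thesis by simp
qed

lemma weak_wave: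
  fixes \<phi> g q r :: "real \<Rightarrow> real" and C :: "real set" and c a :: real
  assumes per: "periodic1 \<phi>"
    and contphi: "continuous_on UNIV \<phi>"
    and Cfin: "\<And>a b. finite (C \<inter> {a..b})"
    and dphi: "\<And>x. x \<notin> C \<Longrightarrow> (\<phi> has_real_derivative g x) (at x)"
    and dQ: "\<And>x. x \<notin> C \<Longrightarrow> ((\<lambda>x. (\<phi> x - c)\<^sup>2) has_real_derivative q x) (at x)"
    and contq: "continuous_on UNIV q"
    and dq: "\<And>x. x \<notin> C \<Longrightarrow> (q has_real_derivative r x) (at x)"
    and ident: "\<And>x. x \<notin> C \<Longrightarrow> (g x)\<^sup>2 = -4 * integral {0..1} \<phi> * \<phi> x + a + r x"
  shows "muHS_traveling_wave c \<phi>"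
proof -
  define K where "K = -4 * integral {0..1} \<phi>"
  have contK: "continuous_on S (\<lambda>x. K * \<phi> x + a)" for S
    using contphi by (intro continuous_intros) (auto intro: continuous_on_subset)
  have rint: "(r has_integral (q y - q x)) {x..y}" if "x \<le> y" for x y
    by (rule ftc_fin[OF Cfin that dq]) (auto intro: continuous_on_subset[OF contq])
  have H1: "H1loc_weak_deriv \<phi> g"
    unfolding H1loc_weak_deriv_def
  proof (intro conjI allI impI)
    fix x y :: real assume "x \<le> y"
    show "(g has_integral \<phi> y - \<phi> x) {x..y}"
      by (rule ftc_fin[OF Cfin \<open>x \<le> y\<close> dphi]) (auto intro: continuous_on_subset[OF contphi])
  next
    fix x y :: real
    show "(\<lambda>t. (g t)\<^sup>2) integrable_on {x..y}"
    proof (cases "x \<le> y")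
      case True
      have ii: "(\<lambda>t. K * \<phi> t + a + r t) integrable_on {x..y}"
        using integrable_add[OF integrable_continuous_interval[OF contK] has_integral_integrable[OF rint[OF True]]]
        by simp
      show ?thesis
        by (rule integrable_spike_finite[OF Cfin[of x y] _ ii]) (use ident K_def in auto)
    next
      case False
      then show ?thesis by (simp add: integrable_on_empty)
    qed
  qed
  have eqn: "integral UNIV (\<lambda>x. (g x)\<^sup>2 * T x) =
             integral UNIV (\<lambda>x. (-4 * integral {0..1} \<phi> * \<phi> x + a) * T x)
           + integral UNIV (\<lambda>x. (\<phi> x - c)\<^sup>2 * deriv (deriv T) x)"
    if tf: "test_function T" for T
  proof -
    have sm: "Dn 2 UNIV T" using tf unfolding test_function_def smooth_on_Dn by blast
    then have dT: "\<And>x. (T has_real_derivative deriv T x) (at x)"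
      and dT': "\<And>x. (deriv T has_real_derivative deriv (deriv T) x) (at x)"
      and dT'': "\<And>x. deriv (deriv T) differentiable at x"
      by (auto simp: numeral_2_eq_2 DERIV_deriv_iff_real_differentiable)
    have cT: "continuous_on S T" "continuous_on S (deriv T)" "continuous_on S (deriv (deriv T))" for S
      using continuous_at_imp_continuous_on DERIV_isCont[OF dT] DERIV_isCont[OF dT']
        differentiable_imp_continuous_within[OF dT''] by blast+
    obtain B0 where B0: "\<And>x. T x \<noteq> 0 \<Longrightarrow> \<bar>x\<bar> \<le> B0"
      using tf unfolding test_function_def bounded_iff by auto
    define R where "R = \<bar>B0\<bar>"
    have T0: "T x = 0" if "R < \<bar>x\<bar>" for x using B0[of x] that R_def by force
    have T1: "deriv T x = 0" if "R < \<bar>x\<bar>" for x using zero_outside_deriv[of R T x, OF T0 that] by blast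
    have T2: "deriv (deriv T) x = 0" if "R < \<bar>x\<bar>" for x using zero_outside_deriv[of R "deriv T" x, OF T1 that] by blast
    define A where "A = -(R+1)"
    define B where "B = R+1"
    have AB: "A \<le> B" unfolding A_def B_def R_def by simp
    have out: "R < \<bar>x\<bar>" if "x \<notin> {A..B}" for x using that unfolding A_def B_def by auto
    have endA: "R < \<bar>A\<bar>" and endB: "R < \<bar>B\<bar>" unfolding A_def B_def R_def by auto
    define F where "F x = q x * T x - (\<phi> x - c)\<^sup>2 * deriv T x" for x
    have contF: "continuous_on {A..B} F" unfolding F_def
      using cT contq contphi by (intro continuous_intros) (auto intro: continuous_on_subset)
    have dF: "(F has_real_derivative (r x * T x - (\<phi> x - c)\<^sup>2 * deriv (deriv T) x)) (at x)"
      if "x \<notin> C" for x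
    proof -
      have "((\<lambda>x. q x * T x - (\<lambda>x. (\<phi> x - c)\<^sup>2) x * deriv T x) has_real_derivative
          (r x * T x + deriv T x * q x) - (q x * deriv T x + deriv (deriv T) x * (\<phi> x - c)\<^sup>2)) (at x)"
        by (intro DERIV_diff DERIV_mult dq[OF that] dT dQ[OF that] dT')
      then show ?thesis unfolding F_def by (simp add: algebra_simps)
    qed
    have h1: "((\<lambda>x. r x * T x - (\<phi> x - c)\<^sup>2 * deriv (deriv T) x) has_integral 0) {A..B}"
      using ftc_fin[OF Cfin AB dF contF] unfolding F_def using T0 T1 endA endB by simp
    have cQ: "continuous_on {A..B} (\<lambda>x. (\<phi> x - c)\<^sup>2 * deriv (deriv T) x)"
      using cT contphi by (intro continuous_intros) (auto intro: continuous_on_subset)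
    obtain I2 where I2: "((\<lambda>x. (\<phi> x - c)\<^sup>2 * deriv (deriv T) x) has_integral I2) {A..B}"
      using integrable_continuous_interval[OF cQ] by blast
    have h2: "((\<lambda>x. r x * T x) has_integral I2) {A..B}"
      using has_integral_add[OF h1 I2] by simp
    have cK: "continuous_on {A..B} (\<lambda>x. (K * \<phi> x + a) * T x)"
      using continuous_on_mult[OF contK cT(1)] .
    obtain I1 where I1: "((\<lambda>x. (K * \<phi> x + a) * T x) has_integral I1) {A..B}"
      using integrable_continuous_interval[OF cK] by blast
    have h3: "((\<lambda>x. (g x)\<^sup>2 * T x) has_integral I1 + I2) {A..B}"
      by (rule has_integral_spike_finite[OF Cfin[of A B] _ has_integral_add[OF I1 h2]])
         (use ident K_def in \<open>auto simp: algebra_simps, metis distrib_left mult.commute\<close>)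
    have "integral UNIV (\<lambda>x. (g x)\<^sup>2 * T x) = I1 + I2"
      by (rule integral_UNIV_eq[OF _ h3]) (use T0 out in auto)
    moreover have "integral UNIV (\<lambda>x. (K * \<phi> x + a) * T x) = I1"
      by (rule integral_UNIV_eq[OF _ I1]) (use T0 out in auto)
    moreover have "integral UNIV (\<lambda>x. (\<phi> x - c)\<^sup>2 * deriv (deriv T) x) = I2"
      by (rule integral_UNIV_eq[OF _ I2]) (use T2 out in auto)
    ultimately show ?thesis unfolding K_def by simp
  qed
  show ?thesis unfolding muHS_traveling_wave_def
    using per H1 eqn by blast
qed

lemma strict_incr_cos:
  fixes f f' :: "real \<Rightarrow> real"
  assumes d: "\<And>x. (f has_real_derivative f' x) (at x)"
    and nn: "\<And>x. f' x \<ge> 0" and pos: "\<And>x. cos x \<noteq> 1 \<Longrightarrow> f' x > 0"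
    and ab: "a < b"
  shows "f a < f b"
proof -
  have mono: "f u \<le> f v" if "u \<le> v" for u v
    using DERIV_nonneg_imp_nondecreasing[OF that] d nn by blast
  obtain t where t: "a < t" "t < b" "cos t \<noteq> 1"
  proof (cases "cos ((a+b)/2) = 1")
    case False then show ?thesis using that[of "(a+b)/2"] ab by auto
  next
    case True
    define e where "e = min ((b-a)/4) 1"
    have e: "0 < e" "e \<le> 1" "e < (b-a)/2" using ab unfolding e_def min_def by auto
    have "sin ((a+b)/2) = 0" using True cos_one_sin_zero by blast
    then have "cos ((a+b)/2 + e) = cos e" using True by (simp add: cos_add)
    moreover have "cos e < cos 0" using e pi_gt3 by (intro cos_monotone_0_pi) auto
    ultimately have "cos ((a+b)/2 + e) \<noteq> 1" by simp
    moreover have "a < (a+b)/2 + e" "(a+b)/2 + e < b" using e ab by (simp_all add: field_simps)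
    ultimately show ?thesis using that by blast
  qed
  show ?thesis
  proof (rule ccontr)
    assume "\<not> f a < f b"
    then have eq: "f a = f b" using mono[of a b] ab by auto
    have const: "f s = f a" if "s \<in> {a<..<b}" for s
      using mono[of a s] mono[of s b] that eq by auto
    have "((\<lambda>_. f a) has_real_derivative 0) (at t)" by simp
    then have "(f has_real_derivative 0) (at t)"
      by (rule has_field_derivative_transform_within_open[of _ _ _ "{a<..<b}"]) (use t const in auto)
    then have "f' t = 0" using DERIV_unique d by blast
    then show False using pos[OF t(3)] by simp
  qed
qed

locale param =
  fixes h :: "real \<Rightarrow> real"
  assumes hsm: "\<And>n. Dn n UNIV h"
    and hper: "\<And>t. h (t + 2*pi) = h t"
    and hnn: "\<And>t. h t \<ge> 0"
    and hpos: "\<And>t. cos t \<noteq> 1 \<Longrightarrow> h t > 0"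
begin

lemma hcont: "continuous_on S h"
proof -
  have "\<forall>x. h differentiable at x" using hsm[of 0] by simp
  then show ?thesis by (meson continuous_at_imp_continuous_on differentiable_imp_continuous_within)
qed

definition X :: "real \<Rightarrow> real" where
  "X t = integral {0..t} h - integral {t..0} h"

lemma X_eq: "A \<le> min t 0 \<Longrightarrow> X t = integral {A..t} h - integral {A..0} h"
proof -
  assume A: "A \<le> min t 0"
  show ?thesis
  proof (cases "0 \<le> t")
    case True
    have "integral {A..0} h + integral {0..t} h = integral {A..t} h"
      using A True Henstock_Kurzweil_Integration.integral_combine[where a=A and c=0 and b=t and f=h] integrable_continuous_interval[OF hcont] by auto
    moreover have "integral {t..0} h = 0" using True
      by (cases "t = 0") auto
    ultimately show ?thesis unfolding X_def by simp
  next
    case False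
    have "integral {A..t} h + integral {t..0} h = integral {A..0} h"
      using A False Henstock_Kurzweil_Integration.integral_combine[where a=A and c=t and b=0 and f=h] integrable_continuous_interval[OF hcont] by auto
    moreover have "integral {0..t} h = 0" using False by simp
    ultimately show ?thesis unfolding X_def by simp
  qed
qed

lemma X_deriv: "(X has_real_derivative h t) (at t)"
proof -
  define A where "A = min t 0 - 1"
  have "((\<lambda>x. integral {A..x} h) has_real_derivative h t) (at t within {A..t+1})"
    using A_def by (intro integral_has_real_derivative hcont) auto
  then have "((\<lambda>x. integral {A..x} h) has_real_derivative h t) (at t)"
    using at_within_Icc_at[of A t "t+1"] A_def by simp
  then have "((\<lambda>x. integral {A..x} h - integral {A..0} h) has_real_derivative h t) (at t)"
    by (auto intro!: derivative_eq_intros)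
  then show ?thesis
  proof (rule has_field_derivative_transform_within_open[of _ _ _ "{A<..}"])
    fix x assume "x \<in> {A<..}"
    then have "A \<le> min x 0" unfolding A_def by auto
    then show "integral {A..x} h - integral {A..0} h = X x" using X_eq by simp
  qed (use A_def in auto)
qed

lemma X_cont: "continuous_on S X"
  using X_deriv by (meson DERIV_isCont continuous_at_imp_continuous_on)

lemma X0: "X 0 = 0" unfolding X_def by simp

definition P :: real where "P = X (2*pi)"

lemma X_strict: "a < b \<Longrightarrow> X a < X b"
  by (rule strict_incr_cos[OF X_deriv hnn hpos])

lemma X_per: "X (t + 2*pi) = X t + P"
proof -
  have "((\<lambda>t. X (t + 2*pi) - X t) has_real_derivative 0) (at t)" for t
  proof -
    have "((\<lambda>t. X (t + 2*pi) - X t) has_real_derivative h (t + 2*pi) - h t) (at t)"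
      using DERIV_shift[of X "h (t + 2*pi)" t "2*pi"] X_deriv[of "t + 2*pi"] X_deriv[of t]
      by (intro DERIV_diff) auto
    then show ?thesis using hper by simp
  qed
  then have "\<forall>t. ((\<lambda>t. X (t + 2*pi) - X t) has_real_derivative 0) (at t)" by blast
  from DERIV_isconst_all[OF this, of t 0] have "X (t + 2*pi) - X t = X (0 + 2*pi) - X 0" by simp
  then show ?thesis unfolding P_def using X0 by simp
qed

lemma P_pos: "P > 0" unfolding P_def using X_strict[of 0 "2*pi"] X0 by simp

lemma X_nat: "X (t + 2*pi*real n) = X t + real n * P"
proof (induction n)
  case (Suc n)
  have "X (t + 2*pi*real (Suc n)) = X ((t + 2*pi*real n) + 2*pi)" by (simp add: algebra_simps)
  also have "\<dots> = X (t + 2*pi*real n) + P" by (rule X_per)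
  also have "\<dots> = X t + real (Suc n) * P" using Suc by (simp add: distrib_right)
  finally show ?case .
qed simp

lemma X_int: "X (t + 2*pi*real_of_int k) = X t + real_of_int k * P"
proof (cases "k \<ge> 0")
  case True
  define n where "n = nat k"
  have "k = int n" using True n_def by simp
  then show ?thesis using X_nat[of t n] by simp
next
  case False
  define n where "n = nat (- k)"
  have n: "k = - int n" using False n_def by simp
  have "X t = X ((t - 2*pi*real n) + 2*pi*real n)" by simp
  also have "\<dots> = X (t - 2*pi*real n) + real n * P" by (rule X_nat)
  finally show ?thesis using n by (simp add: algebra_simps)
qed

lemma X_surj: "\<exists>t. X t = y"
proof -
  obtain n :: nat where n: "\<bar>y\<bar> / P < real n" using reals_Archimedean2 by blast
  then have n': "\<bar>y\<bar> < real n * P" using P_pos by (simp add: field_simps)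
  have "X (0 + 2*pi*real_of_int (- int n)) = - real n * P" using X_int[of 0 "- int n"] X0 by simp
  moreover have "X (0 + 2*pi*real n) = real n * P" using X_nat[of 0 n] X0 by simp
  ultimately have "X (- 2*pi*real n) \<le> y" "y \<le> X (2*pi*real n)" using n' by auto
  then show ?thesis using IVT'[of X "- 2*pi*real n" y "2*pi*real n"] X_cont by auto
qed

definition Xn :: "real \<Rightarrow> real" where "Xn t = X t / P"

lemma Xn_strict: "a < b \<Longrightarrow> Xn a < Xn b" using X_strict P_pos unfolding Xn_def by (simp add: divide_strict_right_mono)
lemma Xn_inj: "inj Xn"
proof (rule injI)
  fix a b assume "Xn a = Xn b"
  then show "a = b" using Xn_strict[of a b] Xn_strict[of b a] by (cases a b rule: linorder_cases) auto
qed
lemma Xn_surj: "surj Xn"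
proof -
  have "\<exists>t. Xn t = y" for y
  proof -
    obtain t where "X t = y * P" using X_surj by blast
    then have "Xn t = y" unfolding Xn_def using P_pos by simp
    then show ?thesis by blast
  qed
  then show ?thesis by (metis surjI)
qed
lemma Xn_int: "Xn (t + 2*pi*real_of_int k) = Xn t + real_of_int k"
  unfolding Xn_def X_int using P_pos by (simp add: field_simps)
lemma Xn_per: "Xn (t + 2*pi) = Xn t + 1"
  using Xn_int[of t 1] by simp
lemma Xn0: "Xn 0 = 0" unfolding Xn_def X0 by simp
lemma Xn_deriv: "(Xn has_real_derivative h t / P) (at t)"
  unfolding Xn_def using DERIV_cdivide[OF X_deriv, of P] by simp
lemma Xn_cont: "continuous_on S Xn"
  using Xn_deriv by (meson DERIV_isCont continuous_at_imp_continuous_on)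

definition Th :: "real \<Rightarrow> real" where "Th = inv Xn"

lemma Th_Xn[simp]: "Th (Xn t) = t" unfolding Th_def by (simp add: Xn_inj)
lemma Xn_Th[simp]: "Xn (Th x) = x" unfolding Th_def by (simp add: Xn_surj surj_f_inv_f)
lemma Th0: "Th 0 = 0" using Th_Xn[of 0] Xn0 by simp
lemma Th_per: "Th (x + 1) = Th x + 2*pi"
  using Th_Xn[of "Th x + 2*pi"] Xn_per[of "Th x"] by simp
lemma Th_int: "Th (x + real_of_int k) = Th x + 2*pi*real_of_int k"
  using Th_Xn[of "Th x + 2*pi*real_of_int k"] Xn_int[of "Th x" k] by simp
lemma Th_strict: "x < y \<Longrightarrow> Th x < Th y"
  by (metis Xn_Th Xn_strict not_less_iff_gr_or_eq)
lemma Th_cont: "isCont Th x"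
proof -
  have "isCont Th (Xn (Th x))"
    by (rule isCont_inverse_function[where d=1]) (auto intro: DERIV_isCont[OF Xn_deriv])
  then show ?thesis by simp
qed
lemma Th_cont_on: "continuous_on S Th" using Th_cont by (simp add: continuous_at_imp_continuous_on)

lemma Th_deriv: "h (Th x) > 0 \<Longrightarrow> (Th has_real_derivative P / h (Th x)) (at x)"
proof -
  assume hp: "h (Th x) > 0"
  have "(Th has_real_derivative inverse (h (Th x) / P)) (at x)"
    by (rule DERIV_inverse_function[where f=Xn and a="x - 1" and b="x + 1"])
       (use hp P_pos Xn_deriv Th_cont in auto)
  then show ?thesis by simp
qed

definition S :: "real set" where "S = {x. h (Th x) > 0}"

lemma S_open: "open S"
proof -
  have "continuous_on UNIV (\<lambda>x. h (Th x))"
    using continuous_on_compose2[OF hcont Th_cont_on] by auto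
  then show ?thesis unfolding S_def
    using open_Collect_less[of "\<lambda>x. 0" "\<lambda>x. h (Th x)"] by (auto simp: continuous_on_def)
qed

lemma Th_smooth: "Dn n S Th"
proof (rule Dn_ode[OF S_open open_Collect_less[of "\<lambda>x. 0" h]])
  show "continuous_on UNIV (\<lambda>x. 0::real)" "continuous_on UNIV h" using hcont by auto
  show "Th x \<in> {t. 0 < h t}" if "x \<in> S" for x using that unfolding S_def by simp
  show "(Th has_real_derivative P * inverse (h (Th x))) (at x)" if "x \<in> S" for x
    using Th_deriv that unfolding S_def by (simp add: field_simps)
  show "Dn n {t. 0 < h t} (\<lambda>t. P * inverse (h t))" for n
  proof -
    have o: "open {t. 0 < h t}" using open_Collect_less[of "\<lambda>x. 0" h] hcont by auto
    have "Dn n {t. 0 < h t} (\<lambda>t. inverse (h t))"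
      by (rule Dn_inverse'[OF o]) (use Dn_subset[OF hsm] in auto)
    then show ?thesis using Dn_mult[OF o Dn_const] by blast
  qed
qed

lemma notS_int: "x \<notin> S \<Longrightarrow> x \<in> \<int>"
proof -
  assume "x \<notin> S"
  then have "h (Th x) \<le> 0" unfolding S_def by auto
  then have "cos (Th x) = 1" using hpos by force
  then obtain k where k: "Th x = real_of_int k * 2 * pi" using cos_one_2pi_int by blast
  have "x = Xn (Th x)" by simp
  also have "\<dots> = Xn (0 + 2*pi*real_of_int k)" using k by (simp add: algebra_simps)
  also have "\<dots> = real_of_int k" using Xn_int[of 0 k] Xn0 by simp
  finally show ?thesis by simp
qed

lemma notS_fin: "finite ((UNIV - S) \<inter> {a..b})"
proof -
  have "(UNIV - S) \<inter> {a..b} \<subseteq> real_of_int ` {\<lfloor>a\<rfloor>..\<lceil>b\<rceil>}"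
  proof
    fix x assume x: "x \<in> (UNIV - S) \<inter> {a..b}"
    then obtain k where k: "x = real_of_int k" using notS_int Ints_cases by blast
    then have "\<lfloor>a\<rfloor> \<le> k" "k \<le> \<lceil>b\<rceil>" using x by (auto simp: floor_le_iff le_ceiling_iff) 
    then show "x \<in> real_of_int ` {\<lfloor>a\<rfloor>..\<lceil>b\<rceil>}" using k by auto
  qed
  then show ?thesis by (rule finite_subset) auto
qed

end

lemma lim_cot_right: "filterlim (\<lambda>t::real. sin t / (1 - cos t)) at_top (at_right 0)"
  by real_asymp
lemma lim_cot_left: "filterlim (\<lambda>t::real. sin t / (1 - cos t)) at_bot (at_left 0)"
  by real_asymp

lemma alg_poly:
  fixes k \<beta> lam PP c0 ss co WW :: real
  assumes WW: "WW\<^sup>2 = 1 - k* co + \<beta>" and sc: "ss\<^sup>2 + co\<^sup>2 = 1" and kb: "(1-k)*\<beta> = 0"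
  shows "(lam* k* PP* ss* WW)\<^sup>2 = (2* lam* PP\<^sup>2*(c0 + lam*(1-k* co)) + (-2* lam* PP\<^sup>2* c0 - lam\<^sup>2* PP\<^sup>2*(2-\<beta>)))*(1-k* co)\<^sup>2
           + 2* lam\<^sup>2* k* PP\<^sup>2*(co*(1-k* co+\<beta>) + k* ss\<^sup>2/2)*(1-k* co)"
  using WW sc kb by algebra

lemma alg_ident:
  fixes k \<beta> lam PP c0 ss co WW :: real
  assumes WW: "WW\<^sup>2 = 1 - k* co + \<beta>" and sc: "ss\<^sup>2 + co\<^sup>2 = 1" and kb: "(1-k)*\<beta> = 0" and p: "1 - k* co \<noteq> 0"
  shows "(lam* k* PP* ss* WW/(1-k* co))\<^sup>2 = 2* lam* PP\<^sup>2*(c0 + lam*(1-k* co)) + (-2* lam* PP\<^sup>2* c0 - lam\<^sup>2* PP\<^sup>2*(2-\<beta>))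
           + 2* lam\<^sup>2* k* PP\<^sup>2*(co*(1-k* co+\<beta>) + k* ss\<^sup>2/2)/(1-k* co)"
proof -
  define A where "A = 2* lam* PP\<^sup>2*(c0 + lam*(1-k* co)) + (-2* lam* PP\<^sup>2* c0 - lam\<^sup>2* PP\<^sup>2*(2-\<beta>))"
  define B where "B = 2* lam\<^sup>2* k* PP\<^sup>2*(co*(1-k* co+\<beta>) + k* ss\<^sup>2/2)"
  define p where "p = 1 - k* co"
  define N where "N = lam* k* PP* ss* WW"
  have e: "N\<^sup>2 = A * p\<^sup>2 + B * p" using alg_poly[OF WW sc kb] unfolding A_def B_def p_def N_def .
  have "(N / p)\<^sup>2 = A + B / p" using e p unfolding p_def[symmetric]
    by (simp add: power_divide field_simps power2_eq_square)
  then show ?thesis unfolding A_def B_def p_def N_def .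
qed

lemma alg_dq:
  fixes lm k PP co ss WW p :: real
  assumes "WW \<noteq> 0" "p \<noteq> 0"
  shows "2 * lm\<^sup>2 * k * PP * (co * (PP * WW / p) * WW + ss * (k * ss / (2 * WW) * (PP * WW / p)))
       = 2 * lm\<^sup>2 * k * PP\<^sup>2 * (co * WW\<^sup>2 + k * ss\<^sup>2 / 2) / p"
  using assms by (simp add: field_simps power2_eq_square)

definition hfun :: "real \<Rightarrow> real \<Rightarrow> real \<Rightarrow> real" where
  "hfun k \<beta> t = (1 - k * cos t) / sqrt (1 - k * cos t + \<beta>)"

locale wv =
  fixes k \<beta> c :: real
  assumes k0: "0 < k" and k1: "k \<le> 1" and b0: "0 \<le> \<beta>" and kb: "(1 - k) * \<beta> = 0"
    and nz: "k < 1 \<or> 0 < \<beta>" and c0: "c \<noteq> 0"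
begin

lemma kcos_le: "k * cos t \<le> 1"
proof -
  have "k * cos t \<le> k * 1" using k0 by (intro mult_left_mono) auto
  then show ?thesis using k1 by linarith
qed

lemma wpos: "1 - k * cos t + \<beta> > 0"
proof (cases "k < 1")
  case True
  have "k * cos t \<le> k * 1" using k0 by (intro mult_left_mono) auto
  then show ?thesis using True b0 by linarith
next
  case False then show ?thesis using nz kcos_le[of t] by linarith
qed

lemma psnn: "1 - k * cos t \<ge> 0" using kcos_le[of t] by linarith

lemma pspos: "cos t \<noteq> 1 \<Longrightarrow> 1 - k * cos t > 0"
proof -
  assume "cos t \<noteq> 1"
  then have "cos t < 1" using cos_le_one[of t] by linarith
  show ?thesis
  proof (cases "cos t \<ge> 0")
    case True
    have "k * cos t \<le> 1 * cos t" using True k1 by (intro mult_right_mono) auto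
    then show ?thesis using \<open>cos t < 1\<close> by linarith
  next
    case False
    then have "k * cos t < 0" using k0 by (simp add: mult_pos_neg)
    then show ?thesis by linarith
  qed
qed

lemma hfun_smooth: "Dn n UNIV (hfun k \<beta>)"
proof -
  have o: "open (UNIV :: real set)" by simp
  have a: "Dn n UNIV (\<lambda>t. 1 - k * cos t)"
    using Dn_diff'[OF o Dn_const Dn_mult[OF o Dn_const Dn_cos]] by blast
  have b: "Dn n UNIV (\<lambda>t. 1 - k * cos t + \<beta>)" using Dn_add[OF o a Dn_const] by blast
  have c: "Dn n UNIV (\<lambda>t. inverse (sqrt (1 - k * cos t + \<beta>)))"
    by (rule Dn_inverse'[OF o Dn_sqrt'[OF o b]]) (use wpos in \<open>auto simp: less_imp_neq[symmetric]\<close>)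
  have "Dn n UNIV (\<lambda>t. (1 - k * cos t) * inverse (sqrt (1 - k * cos t + \<beta>)))"
    using Dn_mult[OF o a c] by blast
  moreover have "(\<lambda>t. (1 - k * cos t) * inverse (sqrt (1 - k * cos t + \<beta>))) = hfun k \<beta>"
    by (auto simp: hfun_def field_simps)
  ultimately show ?thesis by simp
qed

end

sublocale wv \<subseteq> param "hfun k \<beta>"
proof
  show "Dn n UNIV (hfun k \<beta>)" for n by (rule hfun_smooth)
  show "hfun k \<beta> (t + 2 * pi) = hfun k \<beta> t" for t by (simp add: hfun_def)
  show "0 \<le> hfun k \<beta> t" for t using psnn[of t] wpos[of t] by (simp add: hfun_def)
  show "cos t \<noteq> 1 \<Longrightarrow> 0 < hfun k \<beta> t" for t using pspos wpos by (simp add: hfun_def)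
qed

context wv
begin

definition ps :: "real \<Rightarrow> real" where "ps x = 1 - k * cos (Th x)"
definition M :: real where "M = integral {0..1} ps"
definition lam :: real where "lam = - c / (P\<^sup>2 / 2 + M)"
definition phi :: "real \<Rightarrow> real" where "phi x = c + lam * ps x"
definition w :: "real \<Rightarrow> real" where "w t = sqrt (1 - k * cos t + \<beta>)"

lemma ps_cont: "continuous_on A ps"
  unfolding ps_def by (intro continuous_intros Th_cont_on)

lemma M_nn: "M \<ge> 0"
  unfolding M_def ps_def using psnn
  by (intro integral_nonneg integrable_continuous_interval ps_cont[unfolded ps_def]) auto

lemma den_pos: "P\<^sup>2 / 2 + M > 0" using P_pos M_nn by (simp add: add_pos_nonneg)

lemma lam_nz: "lam \<noteq> 0" unfolding lam_def using c0 den_pos by simp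

lemma lam_eq: "lam * (P\<^sup>2 / 2 + M) = - c" unfolding lam_def using den_pos by simp

lemma int_phi: "integral {0..1} phi = - lam * P\<^sup>2 / 2"
proof -
  have i1: "(\<lambda>x. lam * ps x) integrable_on {0..1}"
    by (intro integrable_continuous_interval continuous_intros ps_cont)
  have i2: "(\<lambda>x. c) integrable_on {0..1::real}"
    by (intro integrable_continuous_interval continuous_intros)
  have "integral {0..1} phi = c + lam * M" unfolding phi_def M_def
    using Henstock_Kurzweil_Integration.integral_add[OF i2 i1] by simp
  then show ?thesis using lam_eq by (simp add: algebra_simps)
qed

lemma phi_cont: "continuous_on A phi"
  unfolding phi_def by (intro continuous_intros ps_cont)

lemma phi_per: "periodic1 phi"
  unfolding periodic1_def phi_def ps_def using Th_per by simp

lemma hfun_pos: "hfun k \<beta> t > 0 \<Longrightarrow> 1 - k * cos t > 0"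
  unfolding hfun_def using wpos[of t] by (auto simp: zero_less_divide_iff)

lemma S_ps: "x \<in> S \<Longrightarrow> 1 - k * cos (Th x) > 0"
  unfolding S_def using hfun_pos by blast

lemma w_pos: "w t > 0" unfolding w_def using wpos by simp
lemma w_sq: "(w t)\<^sup>2 = 1 - k * cos t + \<beta>" unfolding w_def using wpos[of t] by simp

lemma w_deriv: "(w has_real_derivative k * sin t / (2 * w t)) (at t)"
  unfolding w_def using wpos[of t]
  by (auto intro!: derivative_eq_intros simp: field_simps)

lemma dTh: "x \<in> S \<Longrightarrow> (Th has_real_derivative P * w (Th x) / (1 - k * cos (Th x))) (at x)"
  using Th_deriv[of x] unfolding S_def w_def hfun_def by simp

definition g :: "real \<Rightarrow> real" where
  "g x = lam * k * P * sin (Th x) * w (Th x) / (1 - k * cos (Th x))"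
definition q :: "real \<Rightarrow> real" where
  "q x = 2 * lam\<^sup>2 * k * P * sin (Th x) * w (Th x)"
definition r :: "real \<Rightarrow> real" where
  "r x = 2 * lam\<^sup>2 * k * P\<^sup>2 * (cos (Th x) * (1 - k * cos (Th x) + \<beta>) + k * (sin (Th x))\<^sup>2 / 2)
           / (1 - k * cos (Th x))"
definition a :: real where "a = -2*lam*P\<^sup>2*c - lam\<^sup>2*P\<^sup>2*(2-\<beta>)"

lemma dphi: "x \<in> S \<Longrightarrow> (phi has_real_derivative g x) (at x)"
proof -
  assume x: "x \<in> S"
  have "(phi has_real_derivative lam * (k * (sin (Th x) * (P * w (Th x) / (1 - k * cos (Th x)))))) (at x)"
    unfolding phi_def ps_def by (auto intro!: derivative_eq_intros dTh[OF x])
  then show ?thesis unfolding g_def by (simp add: algebra_simps)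
qed

lemma dQ: "x \<in> S \<Longrightarrow> ((\<lambda>x. (phi x - c)\<^sup>2) has_real_derivative q x) (at x)"
proof -
  assume x: "x \<in> S"
  have "((\<lambda>x. (phi x - c)\<^sup>2) has_real_derivative 2 * (phi x - c) * g x) (at x)"
    by (auto intro!: derivative_eq_intros dphi[OF x])
  moreover have "2 * (phi x - c) * g x = q x"
    using S_ps[OF x] unfolding phi_def ps_def g_def q_def by (simp add: field_simps power2_eq_square)
  ultimately show ?thesis by simp
qed

lemma wTh_cont: "continuous_on A (\<lambda>x. w (Th x))"
proof -
  have "isCont (\<lambda>x. w (Th x)) x" for x
    by (rule isCont_o2[OF Th_cont DERIV_isCont[OF w_deriv]])
  then show ?thesis by (simp add: continuous_at_imp_continuous_on)
qed

lemma q_cont: "continuous_on A q"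
  unfolding q_def by (intro continuous_intros Th_cont_on wTh_cont)

lemma dq: "x \<in> S \<Longrightarrow> (q has_real_derivative r x) (at x)"
proof -
  assume x: "x \<in> S"
  define D where "D = P * w (Th x) / (1 - k * cos (Th x))"
  have dw: "((\<lambda>x. w (Th x)) has_real_derivative k * sin (Th x) / (2 * w (Th x)) * D) (at x)"
    using DERIV_chain2[OF w_deriv dTh[OF x]] unfolding D_def .
  have "(q has_real_derivative 2 * lam\<^sup>2 * k * P * (cos (Th x) * D * w (Th x) + sin (Th x) * (k * sin (Th x) / (2 * w (Th x)) * D))) (at x)"
    unfolding q_def using dTh[OF x] dw unfolding D_def[symmetric]
    by (auto intro!: derivative_eq_intros simp: algebra_simps)
  moreover have "2 * lam\<^sup>2 * k * P * (cos (Th x) * D * w (Th x) + sin (Th x) * (k * sin (Th x) / (2 * w (Th x)) * D)) = r x"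
    using alg_dq[of "w (Th x)" "1 - k * cos (Th x)" lam k P "cos (Th x)" "sin (Th x)"]
      S_ps[OF x] w_pos[of "Th x"] w_sq[of "Th x"] unfolding D_def r_def by simp
  ultimately show ?thesis by simp
qed

lemma ident: "x \<in> S \<Longrightarrow> (g x)\<^sup>2 = -4 * integral {0..1} phi * phi x + a + r x"
proof -
  assume x: "x \<in> S"
  have "(g x)\<^sup>2 = 2*lam*P\<^sup>2*(c + lam*(1-k*cos (Th x))) + (-2*lam*P\<^sup>2*c - lam\<^sup>2*P\<^sup>2*(2-\<beta>))
           + 2*lam\<^sup>2*k*P\<^sup>2*(cos (Th x)*(1-k*cos (Th x)+\<beta>) + k*(sin (Th x))\<^sup>2/2)/(1-k*cos (Th x))"
    unfolding g_def using alg_ident[OF w_sq sin_cos_squared_add kb] S_ps[OF x] by simp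
  then show ?thesis unfolding int_phi a_def r_def phi_def ps_def by (simp add: algebra_simps)
qed

lemma wave: "muHS_traveling_wave c phi"
  by (rule weak_wave[OF phi_per phi_cont notS_fin dphi dQ q_cont dq ident]) auto

end

context wv
begin

lemma phi_smooth: "Dn n S phi"
proof -
  have "Dn n S (\<lambda>x. c + lam * (1 - k * cos (Th x)))"
    using Dn_add[OF S_open Dn_const Dn_mult[OF S_open Dn_const
          Dn_diff'[OF S_open Dn_const Dn_mult[OF S_open Dn_const Dn_cos'[OF S_open Th_smooth]]]]] .
  then show ?thesis unfolding phi_def ps_def .
qed

lemma Th_Xn': "Th (Xn t) = t" by simp

lemma phi_abs: "\<bar>phi x - c\<bar> = \<bar>lam\<bar> * (1 - k * cos (Th x))"
  unfolding phi_def ps_def using psnn[of "Th x"] by (simp add: abs_mult)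

lemma phi_abs_lb: "\<bar>phi x - c\<bar> \<ge> \<bar>lam\<bar> * (1 - k)"
proof -
  have "k * cos (Th x) \<le> k" using k0 cos_le_one[of "Th x"] by (simp add: mult_left_le)
  then show ?thesis unfolding phi_abs by (intro mult_left_mono) auto
qed

lemma phi_abs_ub: "\<bar>phi x - c\<bar> \<le> \<bar>lam\<bar> * (1 + k)"
proof -
  have "- k \<le> k * cos (Th x)" using k0 cos_ge_minus_one[of "Th x"]
    by (metis minus_mult_right mult.right_neutral mult_left_mono less_imp_le)
  then show ?thesis unfolding phi_abs by (intro mult_left_mono) auto
qed

lemma phi_0: "phi 0 = c + lam * (1 - k)" unfolding phi_def ps_def Th0 by simp
lemma phi_pi: "phi (Xn pi) = c + lam * (1 + k)" unfolding phi_def ps_def by simp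

lemma S_UNIV: "k < 1 \<Longrightarrow> S = UNIV"
proof -
  assume "k < 1"
  have "hfun k \<beta> t > 0" for t
  proof -
    have "k * cos t \<le> k" using k0 cos_le_one[of t] by (simp add: mult_left_le)
    then have "1 - k * cos t > 0" using \<open>k < 1\<close> by linarith
    then show ?thesis unfolding hfun_def using wpos[of t] by simp
  qed
  then show ?thesis unfolding S_def by auto
qed

lemma smooth_wave_phi: "k < 1 \<Longrightarrow> smooth_wave c phi"
proof -
  assume k: "k < 1"
  have "smooth_on UNIV phi" unfolding smooth_on_Dn using phi_smooth S_UNIV[OF k] by simp
  moreover have "phi 0 \<noteq> phi (Xn pi)" unfolding phi_0 phi_pi using lam_nz k0 by simp
  ultimately show ?thesis unfolding smooth_wave_def using wave by blast
qed

end

lemma wv_smooth: "c \<noteq> 0 \<Longrightarrow> 0 < k \<Longrightarrow> k < 1 \<Longrightarrow> wv k 0 c"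
  by unfold_locales auto

lemma smooth_family: 
  assumes c: "c \<noteq> 0"
  shows "one_param_family (smooth_wave c)"
  unfolding one_param_family_def
proof (intro exI conjI ballI impI)
  show "(0::real) < 1" by simp
  show "smooth_wave c (wv.phi k 0 c)" if "k \<in> {0<..<1}" for k
    using wv.smooth_wave_phi[OF wv_smooth[OF c]] that by auto
  show "\<not> (\<exists>d. \<forall>x. wv.phi s 0 c x = wv.phi t 0 c (x + d))"
    if s: "s \<in> {0<..<1}" and t: "t \<in> {0<..<1}" and st: "s \<noteq> t" for s t
  proof
    assume "\<exists>d. \<forall>x. wv.phi s 0 c x = wv.phi t 0 c (x + d)"
    then obtain d where d: "\<And>x. wv.phi s 0 c x = wv.phi t 0 c (x + d)" by blast
    interpret S: wv s 0 c using wv_smooth[OF c] s by auto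
    interpret T: wv t 0 c using wv_smooth[OF c] t by auto
    have d': "T.phi y = S.phi (y - d)" for y using d[of "y - d"] by simp
    have 1: "\<bar>S.lam\<bar> * (1 - s) \<ge> \<bar>T.lam\<bar> * (1 - t)"
      using S.phi_0 d[of 0] T.phi_abs_lb[of d] s by (simp add: abs_mult)
    have 2: "\<bar>T.lam\<bar> * (1 - t) \<ge> \<bar>S.lam\<bar> * (1 - s)"
      using T.phi_0 d'[of 0] S.phi_abs_lb[of "0 - d"] t by (simp add: abs_mult)
    have 3: "\<bar>S.lam\<bar> * (1 + s) \<le> \<bar>T.lam\<bar> * (1 + t)"
      using S.phi_pi d[of "S.Xn pi"] T.phi_abs_ub[of "S.Xn pi + d"] s
      by (simp add: abs_mult)
    have 4: "\<bar>T.lam\<bar> * (1 + t) \<le> \<bar>S.lam\<bar> * (1 + s)"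
      using T.phi_pi d'[of "T.Xn pi"] S.phi_abs_ub[of "T.Xn pi - d"] t
      by (simp add: abs_mult)
    have e1: "\<bar>S.lam\<bar> * (1 - s) = \<bar>T.lam\<bar> * (1 - t)" using 1 2 by linarith
    have e2: "\<bar>S.lam\<bar> * (1 + s) = \<bar>T.lam\<bar> * (1 + t)" using 3 4 by linarith
    have "\<bar>S.lam\<bar> = \<bar>T.lam\<bar>" using e1 e2 by (simp add: algebra_simps)
    then have "\<bar>S.lam\<bar> * s = \<bar>S.lam\<bar> * t" using e2 by (simp add: algebra_simps)
    then show False using S.lam_nz st by simp
  qed
qed

context wv
begin

lemma cusp_S: "k = 1 \<Longrightarrow> S = {x. phi x \<noteq> c}"
proof -
  assume k: "k = 1"
  have "x \<in> S \<longleftrightarrow> phi x \<noteq> c" for x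
  proof
    assume "x \<in> S"
    then show "phi x \<noteq> c" using S_ps[of x] lam_nz unfolding phi_def ps_def by auto
  next
    assume "phi x \<noteq> c"
    then have "1 - k * cos (Th x) \<noteq> 0" unfolding phi_def ps_def by auto
    then have "1 - k * cos (Th x) > 0" using psnn[of "Th x"] by linarith
    moreover have "1 - k * cos t > 0 \<Longrightarrow> hfun k \<beta> t > 0" for t
      unfolding hfun_def using wpos[of t] by simp
    ultimately show "x \<in> S" unfolding S_def by simp
  qed
  then show ?thesis by auto
qed

lemma sin_int: "sin (t + 2 * pi * real_of_int m) = sin t"
  by (simp add: sin_add)
lemma cos_int: "cos (t + 2 * pi * real_of_int m) = cos t"
  by (simp add: cos_add)

lemma g_shift: "g (t + real_of_int m) = g t"
  unfolding g_def w_def Th_int sin_int cos_int ..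

lemma wTh_isCont: "isCont (\<lambda>x. w (Th x)) x"
  by (rule isCont_o2[OF Th_cont DERIV_isCont[OF w_deriv]])

lemma Th_right: "filterlim Th (at_right 0) (at_right 0)"
proof -
  have "(Th \<longlongrightarrow> 0) (at 0)" using Th_cont[of 0] Th0 unfolding isCont_def by simp
  then have t: "(Th \<longlongrightarrow> 0) (at_right 0)" by (rule tendsto_mono[OF at_le, rotated]) auto
  have "eventually (\<lambda>x. Th x \<in> {0<..} \<and> Th x \<noteq> 0) (at_right (0::real))"
  proof -
    have "\<forall>y. 0 < y \<longrightarrow> 0 < Th y" using Th_strict[of 0] Th0 by auto
    then show ?thesis unfolding eventually_at_right_field by (intro exI[of _ 1]) force
  qed
  then show ?thesis using t unfolding filterlim_at by auto
qed

lemma Th_left: "filterlim Th (at_left 0) (at_left 0)"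
proof -
  have "(Th \<longlongrightarrow> 0) (at 0)" using Th_cont[of 0] Th0 unfolding isCont_def by simp
  then have t: "(Th \<longlongrightarrow> 0) (at_left 0)" by (rule tendsto_mono[OF at_le, rotated]) auto
  have "eventually (\<lambda>x. Th x \<in> {..<0} \<and> Th x \<noteq> 0) (at_left (0::real))"
  proof -
    have "\<forall>y. y < 0 \<longrightarrow> Th y < 0" using Th_strict[of _ 0] Th0 by auto
    then show ?thesis unfolding eventually_at_left_field by (intro exI[of _ "-1"]) force
  qed
  then show ?thesis using t unfolding filterlim_at by auto
qed

lemma lim_wf: "k = 1 \<Longrightarrow> ((\<lambda>t. lam * P * w (Th t)) \<longlongrightarrow> lam * P * sqrt \<beta>) (at 0 within A)"
proof -
  assume k: "k = 1"
  have "((\<lambda>t. w (Th t)) \<longlongrightarrow> w (Th 0)) (at 0 within A)"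
  proof -
    have "((\<lambda>t. w (Th t)) \<longlongrightarrow> w (Th 0)) (at 0)" using wTh_isCont[of 0] by (simp add: isCont_def)
    then show ?thesis using tendsto_mono[OF at_le[of A UNIV]] by auto
  qed
  moreover have "w (Th 0) = sqrt \<beta>" unfolding Th0 w_def using k by simp
  ultimately have "((\<lambda>t. w (Th t)) \<longlongrightarrow> sqrt \<beta>) (at 0 within A)" by simp
  then show ?thesis by (intro tendsto_intros)
qed

lemma g_form: "k = 1 \<Longrightarrow> g t = (lam * P * w (Th t)) * (sin (Th t) / (1 - cos (Th t)))"
  unfolding g_def by simp

lemma beta_pos: "k = 1 \<Longrightarrow> \<beta> > 0" using nz by auto

lemma g_lims:
  assumes k: "k = 1"
  shows "lam > 0 \<Longrightarrow> filterlim g at_top (at_right 0) \<and> filterlim g at_bot (at_left 0)"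
    and "lam < 0 \<Longrightarrow> filterlim g at_bot (at_right 0) \<and> filterlim g at_top (at_left 0)"
proof -
  have ur: "filterlim (\<lambda>t. sin (Th t) / (1 - cos (Th t))) at_top (at_right 0)"
    using filterlim_compose[OF lim_cot_right Th_right] .
  have ul: "filterlim (\<lambda>t. sin (Th t) / (1 - cos (Th t))) at_bot (at_left 0)"
    using filterlim_compose[OF lim_cot_left Th_left] .
  have g: "g = (\<lambda>t. (lam * P * w (Th t)) * (sin (Th t) / (1 - cos (Th t))))"
    using g_form[OF k] by auto
  have sb: "sqrt \<beta> > 0" using beta_pos[OF k] by simp
  {
    assume l: "lam > 0"
    then have L: "lam * P * sqrt \<beta> > 0" using P_pos sb by simp
    show "filterlim g at_top (at_right 0) \<and> filterlim g at_bot (at_left 0)"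
      unfolding g
      using filterlim_tendsto_pos_mult_at_top[OF lim_wf[OF k] L ur]
        filterlim_tendsto_pos_mult_at_bot[OF lim_wf[OF k] L ul] by (rule conjI)
  }
  {
    assume l: "lam < 0"
    then have L: "lam * P * sqrt \<beta> < 0" using P_pos sb by (simp add: mult_neg_pos)
    have A: "filterlim (\<lambda>t. (lam * P * w (Th t)) * (sin (Th t) / (1 - cos (Th t)))) at_bot (at_right 0)"
      using filterlim_tendsto_neg_mult_at_bot[OF lim_wf[OF k] L ur] .
    have B: "filterlim (\<lambda>t. (lam * P * w (Th t)) * (sin (Th t) / (1 - cos (Th t)))) at_top (at_left 0)"
      by (subst filterlim_tendsto_neg_mult_at_top_iff[OF lim_wf[OF k] L]) (rule ul)
    show "filterlim g at_bot (at_right 0) \<and> filterlim g at_top (at_left 0)"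
      unfolding g using A B by (rule conjI)
  }
qed

lemma deriv_shift_ev:
  assumes x0: "x0 \<notin> S"
  shows "eventually (\<lambda>t. deriv phi (t + x0) = g t) (at_right 0)"
    and "eventually (\<lambda>t. deriv phi (t + x0) = g t) (at_left 0)"
proof -
  obtain m where m: "x0 = real_of_int m" using notS_int[OF x0] Ints_cases by blast
  have key: "deriv phi (t + x0) = g t" if "0 < \<bar>t\<bar>" "\<bar>t\<bar> < 1" for t
  proof -
    have "t + x0 \<in> S"
    proof (rule ccontr)
      assume "t + x0 \<notin> S"
      then have "t + x0 \<in> \<int>" by (rule notS_int)
      then have "t \<in> \<int>" using m by (metis Ints_diff Ints_of_int add_diff_cancel_right')
      then obtain j where "t = real_of_int j" using Ints_cases by blast
      then show False using that by auto
    qed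
    then have "deriv phi (t + x0) = g (t + x0)" using dphi by (simp add: DERIV_imp_deriv)
    then show ?thesis using g_shift m by simp
  qed
  show "eventually (\<lambda>t. deriv phi (t + x0) = g t) (at_right 0)"
    unfolding eventually_at_right_field using key by (intro exI[of _ 1]) auto
  show "eventually (\<lambda>t. deriv phi (t + x0) = g t) (at_left 0)"
    unfolding eventually_at_left_field using key by (intro exI[of _ "-1"]) auto
qed

lemma cusp_phi:
  assumes k: "k = 1" and x0: "phi x0 = c"
  shows "cusp_at phi x0"
proof -
  have x0S: "x0 \<notin> S" using cusp_S[OF k] x0 by auto
  have R: "filterlim (deriv phi) F (at_right x0) \<longleftrightarrow> filterlim g F (at_right 0)" for F
  proof -
    have "filterlim (deriv phi) F (at_right x0) \<longleftrightarrow> filterlim (\<lambda>t. deriv phi (t + x0)) F (at_right 0)"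
      by (simp add: at_right_to_0[of x0] filterlim_filtermap)
    also have "\<dots> \<longleftrightarrow> filterlim g F (at_right 0)"
      by (rule filterlim_cong[OF refl refl deriv_shift_ev(1)[OF x0S]])
    finally show ?thesis .
  qed
  have L: "filterlim (deriv phi) F (at_left x0) \<longleftrightarrow> filterlim g F (at_left 0)" for F
  proof -
    have "filterlim (deriv phi) F (at_left x0) \<longleftrightarrow> filterlim (\<lambda>t. deriv phi (t + x0)) F (at_left 0)"
      by (simp add: at_left_to_0[of x0] filterlim_filtermap)
    also have "\<dots> \<longleftrightarrow> filterlim g F (at_left 0)"
      by (rule filterlim_cong[OF refl refl deriv_shift_ev(2)[OF x0S]])
    finally show ?thesis .
  qed
  show ?thesis
  proof (cases "lam > 0")
    case True
    then show ?thesis unfolding cusp_at_def R L using g_lims(1)[OF k] by blast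
  next
    case False
    then have "lam < 0" using lam_nz by linarith
    then show ?thesis unfolding cusp_at_def R L using g_lims(2)[OF k] by blast
  qed
qed

lemma cusped_wave_phi: "k = 1 \<Longrightarrow> cusped_wave c phi"
proof -
  assume k: "k = 1"
  have "smooth_on {x. phi x \<noteq> c} phi" unfolding smooth_on_Dn using phi_smooth cusp_S[OF k] by simp
  moreover have "phi 0 = c" using phi_0 k by simp
  ultimately show ?thesis unfolding cusped_wave_def using wave cusp_phi[OF k] by blast
qed

end

context wv
begin

lemma cos_from_phi: "phi y = c + lam * v \<Longrightarrow> k * cos (Th y) = 1 - v"
proof -
  assume "phi y = c + lam * v"
  then have "lam * (1 - k * cos (Th y)) = lam * v" unfolding phi_def ps_def by simp
  then have "1 - k * cos (Th y) = v" using lam_nz by simp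
  then show ?thesis by simp
qed

lemma pt_gen:
  assumes k: "k = 1" and y: "phi y = c + lam * v" and v: "v \<noteq> 0"
  shows "(phi has_real_derivative g y) (at y) \<and>
         (g y)\<^sup>2 = lam\<^sup>2 * P\<^sup>2 * (1 - (1 - v)\<^sup>2) * (v + \<beta>) / v\<^sup>2"
proof -
  have co: "cos (Th y) = 1 - v" using cos_from_phi[OF y] k by simp
  have yS: "y \<in> S" using cusp_S[OF k] y v lam_nz by simp
  have s2: "(sin (Th y))\<^sup>2 = 1 - (1 - v)\<^sup>2" using sin_cos_squared_add[of "Th y"] co by simp
  have w2: "(w (Th y))\<^sup>2 = v + \<beta>" using w_sq[of "Th y"] co k by simp
  have "(g y)\<^sup>2 = lam\<^sup>2 * P\<^sup>2 * (sin (Th y))\<^sup>2 * (w (Th y))\<^sup>2 / v\<^sup>2"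
    unfolding g_def using co k by (simp add: power_mult_distrib power_divide)
  then show ?thesis using dphi[OF yS] s2 w2 by simp
qed

lemma pt_half: "k = 1 \<Longrightarrow> phi y = c + lam \<Longrightarrow>
    (phi has_real_derivative g y) (at y) \<and> (g y)\<^sup>2 = lam\<^sup>2 * P\<^sup>2 * (1 + \<beta>)"
  using pt_gen[of y 1] by (simp add: add.commute)

lemma pt_third: "k = 1 \<Longrightarrow> phi y = c + lam / 2 \<Longrightarrow>
    (phi has_real_derivative g y) (at y) \<and> (g y)\<^sup>2 = 3 * lam\<^sup>2 * P\<^sup>2 * (1/2 + \<beta>)"
  using pt_gen[of y "1/2"] by (simp add: power2_eq_square field_simps)

lemma phi_half: "phi (Xn (pi/2)) = c + lam" unfolding phi_def ps_def by simp
lemma phi_third: "phi (Xn (pi/3)) = c + lam * (1 - k / 2)" unfolding phi_def ps_def by (simp add: cos_60)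

end

lemma wv_cusp: "c \<noteq> 0 \<Longrightarrow> 0 < b \<Longrightarrow> wv 1 b c"
  by unfold_locales auto

lemma cusped_family: 
  assumes c: "c \<noteq> 0"
  shows "one_param_family (cusped_wave c)"
  unfolding one_param_family_def
proof (intro exI conjI ballI impI)
  show "(0::real) < 1" by simp
  show "cusped_wave c (wv.phi 1 b c)" if "b \<in> {0<..<1}" for b
    using wv.cusped_wave_phi[OF wv_cusp[OF c]] that by auto
  show "\<not> (\<exists>d. \<forall>x. wv.phi 1 s c x = wv.phi 1 t c (x + d))"
    if s: "s \<in> {0<..<1}" and t: "t \<in> {0<..<1}" and st: "s \<noteq> t" for s t
  proof
    assume "\<exists>d. \<forall>x. wv.phi 1 s c x = wv.phi 1 t c (x + d)"
    then obtain d where d: "\<And>x. wv.phi 1 s c x = wv.phi 1 t c (x + d)" by blast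
    interpret S: wv 1 s c using wv_cusp[OF c] s by auto
    interpret T: wv 1 t c using wv_cusp[OF c] t by auto
    have d': "T.phi y = S.phi (y - d)" for y using d[of "y - d"] by simp
    have fe: "S.phi = (\<lambda>x. T.phi (x + d))" using d by auto
    have 3: "\<bar>S.lam\<bar> * 2 \<le> \<bar>T.lam\<bar> * 2"
      using S.phi_pi d[of "S.Xn pi"] T.phi_abs_ub[of "S.Xn pi + d"] by (simp add: abs_mult)
    have 4: "\<bar>T.lam\<bar> * 2 \<le> \<bar>S.lam\<bar> * 2"
      using T.phi_pi d'[of "T.Xn pi"] S.phi_abs_ub[of "T.Xn pi - d"] by (simp add: abs_mult)
    have ab: "\<bar>S.lam\<bar> = \<bar>T.lam\<bar>" using 3 4 by linarith
    have L: "S.lam = T.lam"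
    proof (rule ccontr)
      assume "S.lam \<noteq> T.lam"
      then have m: "S.lam = - T.lam" using ab by (auto simp: abs_if split: if_splits)
      have "T.lam * (T.P\<^sup>2 / 2 + T.M) + T.lam * (S.P\<^sup>2 / 2 + S.M) = 0"
        using S.lam_eq T.lam_eq m by simp
      then have "T.lam * ((T.P\<^sup>2 / 2 + T.M) + (S.P\<^sup>2 / 2 + S.M)) = 0" by (simp add: algebra_simps)
      then show False using T.lam_nz T.den_pos S.den_pos by simp
    qed
    define l where "l = S.lam"
    have der: "(S.g x)\<^sup>2 = (T.g (x + d))\<^sup>2"
      if "(S.phi has_real_derivative S.g x) (at x)" "(T.phi has_real_derivative T.g (x + d)) (at (x + d))" for x
    proof -
      have "((\<lambda>x. T.phi (x + d)) has_real_derivative T.g (x + d)) (at x)"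
        using that(2) DERIV_shift by blast
      then have "(S.phi has_real_derivative T.g (x + d)) (at x)" using fe by simp
      then show ?thesis using DERIV_unique that(1) by metis
    qed
    have h1: "S.phi (S.Xn (pi/2)) = c + l" using S.phi_half l_def by simp
    have h1': "T.phi (S.Xn (pi/2) + d) = c + T.lam" using h1 d L l_def by simp
    have e1: "l\<^sup>2 * S.P\<^sup>2 * (1 + s) = l\<^sup>2 * T.P\<^sup>2 * (1 + t)"
      using der[OF conjunct1[OF S.pt_half[OF refl h1[unfolded l_def]]] conjunct1[OF T.pt_half[OF refl h1']]]
        conjunct2[OF S.pt_half[OF refl h1[unfolded l_def]]] conjunct2[OF T.pt_half[OF refl h1']] L l_def by simp
    have h2: "S.phi (S.Xn (pi/3)) = c + l / 2" using S.phi_third l_def by simp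
    have h2': "T.phi (S.Xn (pi/3) + d) = c + T.lam / 2" using h2 d L l_def by simp
    have e2: "3 * l\<^sup>2 * S.P\<^sup>2 * (1/2 + s) = 3 * l\<^sup>2 * T.P\<^sup>2 * (1/2 + t)"
      using der[OF conjunct1[OF S.pt_third[OF refl h2[unfolded l_def]]] conjunct1[OF T.pt_third[OF refl h2']]]
        conjunct2[OF S.pt_third[OF refl h2[unfolded l_def]]] conjunct2[OF T.pt_third[OF refl h2']] L l_def by simp
    have l0: "l\<^sup>2 > 0" using S.lam_nz l_def by simp
    have f1: "S.P\<^sup>2 * (1 + s) = T.P\<^sup>2 * (1 + t)" using e1 l0 by simp
    have f2: "S.P\<^sup>2 * (1/2 + s) = T.P\<^sup>2 * (1/2 + t)" using e2 l0 by simp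
    have "S.P\<^sup>2 = T.P\<^sup>2" using f1 f2 by (simp add: algebra_simps)
    then have "S.P\<^sup>2 * s = S.P\<^sup>2 * t" using f1 by (simp add: algebra_simps)
    then show False using S.P_pos st by simp
  qed
qed

theorem theorem6p3:
  fixes c :: real
  assumes "c \<noteq> 0"
  shows "one_param_family (smooth_wave c) \<and> one_param_family (cusped_wave c)"
  using smooth_family[OF assms] cusped_family[OF assms] by blast

end
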